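(* Let $\mathcal{D}$ be a liability category and let $\mathcal{L}$ be the liability sheaf on $\mathcal{H}_G$ of a liability network $N=(G,X,\lambda,\iota;\delta,\hat\alpha)$ in $\mathcal{D}$, where $G=(V,E,s,t)$ is acyclic, and let $r$ be the maximum length (in edges) of a directed path in $G$. Then $\Phi_*^{r+1}$ is constant on $\mathcal{G}_P=\mathrm{Hom}(1,P)$, with image a single global element $\mathbf{x}^*\in\mathrm{Fix}(\Phi_* )$; equivalently, $\mathcal{H}_G$ admits a unique clearing section (i.e. $\Gamma(\mathcal{H}_G;\mathcal{L})$ has exactly one element), computed by $r+1$ applications of $\Phi_*$ to any starting point.
   Context: A liability category is a category $\mathcal{D}$ with terminal object $1$, finite products and equalizers, a partial order on each $\mathrm{Hom}(1,P)$ preserved by postcomposition, a pullback-stable class $\mathcal{S}_P$ of constraint monomorphisms into each $P$, bound selectors $\beta_P:\mathrm{Hom}(1,P)\to\mathcal{S}_P$, and order isomorphisms $\mathrm{Hom}(1,\prod_iP_i)\cong\prod_i\mathrm{Hom}(1,P_i)$ (componentwise order) for finite families. A liability network in $\mathcal{D}$: finite directed graph $G=(V,E,s,t)$, payment objects $X_v$, liabilities $\lambda_e:1\to X_{s(e)}$, exogenous resources $\iota_v:1\to X_v$, distributors $\delta_e:X_{s(e)}\to X_{s(e)}^{\lambda_e}$ where $X_{s(e)}^{\lambda_e}$ is the domain of $\beta_{X_{s(e)}}(\lambda_e)$, aggregators $\hat\alpha_v:X_v\times\prod_{t(e)=v}X_{s(e)}^{\lambda_e}\to X_v$, and partial aggregators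 $\alpha_v=\hat\alpha_v\circ(\iota_v\times\mathrm{id}):\prod_{t(e)=v}X_{s(e)}^{\lambda_e}\to X_v$, an empty product being $1$. With $P=\prod_vX_v$, $B=\prod_eX_{s(e)}^{\lambda_e}$, $D:P\to B$ with components $\delta_e\circ\pi_{s(e)}$ and $A:B\to P$ with components $\alpha_v\circ\langle\pi_e\rangle_{t(e)=v}$, the clearing operator is $\Phi=A\circ D$; $\Phi_*(\mathbf{x})=\Phi\circ\mathbf{x}$ on $\mathrm{Hom}(1,P)$ and $\mathrm{Fix}(\Phi_* )$ is its fixed-point set. The liability hypergraph $\mathcal{H}_G$ has vertices $V\sqcup\{e^*:e\in E\}$ and hyperedges $h_v^\delta$ (source $\{v\}$, target $\{e^*:s(e)=v\}$) and $h_v^\alpha$ (empty source, target $\{e^*:t(e)=v\}\cup\{v\}$); the incidence category $\mathcal{I}(\mathcal{H}_G)$ has one non-identity arrow $h\to w$ per incidence and no composites. The liability sheaf has stalks $X_v$ at $v,h_v^\delta$, $X_{s(e)}^{\lambda_e}$ at $e^*$, $\prod_{t(e)=v}X_{s(e)}^{\lambda_e}$ at $h_v^\alpha$, restrictions $\mathrm{id},\delta_e,\pi_e,\alpha_v$. $\Gamma(\mathcal{H}_G;\mathcal{L})=\mathrm{Hom}(1,\lim_{\mathcal{I}(\mathcal{H}_G)}\mathcal{L})$; its elements are the clearing sections. *)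

theory Defs
  imports Main
begin

record ('o,'m) lcat =
  ob   :: "'o set"
  ar   :: "'m set"
  dm   :: "'m \<Rightarrow> 'o"
  cd   :: "'m \<Rightarrow> 'o"
  idt  :: "'o \<Rightarrow> 'm"
  cmp  :: "'m \<Rightarrow> 'm \<Rightarrow> 'm"          \<comment> \<open>cmp g f = g o f\<close>
  trm  :: "'o"
  ordr :: "'o \<Rightarrow> 'm \<Rightarrow> 'm \<Rightarrow> bool"   \<comment> \<open>partial order on Hom(1,P)\<close>
  cons :: "'o \<Rightarrow> 'm set"
  bsel :: "'o \<Rightarrow> 'm \<Rightarrow> 'm"

definition hom :: "('o,'m,'z) lcat_scheme \<Rightarrow> 'o \<Rightarrow> 'o \<Rightarrow> 'm set" where
  "hom L a b = {f \<in> ar L. dm L f = a \<and> cd L f = b}"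

definition is_category :: "('o,'m,'z) lcat_scheme \<Rightarrow> bool" where
  "is_category L \<longleftrightarrow>
     (\<forall>f\<in>ar L. dm L f \<in> ob L \<and> cd L f \<in> ob L) \<and>
     (\<forall>a\<in>ob L. idt L a \<in> hom L a a) \<and>
     (\<forall>f\<in>ar L. \<forall>g\<in>ar L. cd L f = dm L g \<longrightarrow> cmp L g f \<in> hom L (dm L f) (cd L g)) \<and>
     (\<forall>f\<in>ar L. cmp L f (idt L (dm L f)) = f \<and> cmp L (idt L (cd L f)) f = f) \<and>
     (\<forall>f\<in>ar L. \<forall>g\<in>ar L. \<forall>h\<in>ar L. cd L f = dm L g \<and> cd L g = dm L h \<longrightarrow>
         cmp L h (cmp L g f) = cmp L (cmp L h g) f)"

definition is_terminal :: "('o,'m,'z) lcat_scheme \<Rightarrow> 'o \<Rightarrow> bool" where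
  "is_terminal L T \<longleftrightarrow> T \<in> ob L \<and> (\<forall>a\<in>ob L. \<exists>!f. f \<in> hom L a T)"

definition is_product ::
  "('o,'m,'z) lcat_scheme \<Rightarrow> 'i set \<Rightarrow> ('i \<Rightarrow> 'o) \<Rightarrow> 'o \<Rightarrow> ('i \<Rightarrow> 'm) \<Rightarrow> bool" where
  "is_product L I X Pr pr \<longleftrightarrow> Pr \<in> ob L \<and> (\<forall>i\<in>I. pr i \<in> hom L Pr (X i)) \<and>
     (\<forall>Q\<in>ob L. \<forall>f. (\<forall>i\<in>I. f i \<in> hom L Q (X i)) \<longrightarrow>
        (\<exists>!u. u \<in> hom L Q Pr \<and> (\<forall>i\<in>I. cmp L (pr i) u = f i)))"

definition is_binprod ::
  "('o,'m,'z) lcat_scheme \<Rightarrow> 'o \<Rightarrow> 'o \<Rightarrow> 'o \<Rightarrow> 'm \<Rightarrow> 'm \<Rightarrow> bool" where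
  "is_binprod L A B Pr p1 p2 \<longleftrightarrow> Pr \<in> ob L \<and> p1 \<in> hom L Pr A \<and> p2 \<in> hom L Pr B \<and>
     (\<forall>Q\<in>ob L. \<forall>f g. f \<in> hom L Q A \<and> g \<in> hom L Q B \<longrightarrow>
        (\<exists>!u. u \<in> hom L Q Pr \<and> cmp L p1 u = f \<and> cmp L p2 u = g))"

text \<open>Finite products: every family indexed by {..<n} has a product (every finite family
  can be reindexed this way).\<close>
definition has_finite_products :: "('o,'m,'z) lcat_scheme \<Rightarrow> bool" where
  "has_finite_products L \<longleftrightarrow>
     (\<forall>n::nat. \<forall>X. (\<forall>i<n. X i \<in> ob L) \<longrightarrow> (\<exists>Pr pr. is_product L {..<n} X Pr pr))"

definition is_equalizer ::
  "('o,'m,'z) lcat_scheme \<Rightarrow> 'm \<Rightarrow> 'm \<Rightarrow> 'o \<Rightarrow> 'm \<Rightarrow> bool" where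
  "is_equalizer L f g Eq e \<longleftrightarrow> Eq \<in> ob L \<and> e \<in> hom L Eq (dm L f) \<and>
     cmp L f e = cmp L g e \<and>
     (\<forall>h\<in>ar L. cd L h = dm L f \<and> cmp L f h = cmp L g h \<longrightarrow>
        (\<exists>!u. u \<in> hom L (dm L h) Eq \<and> cmp L e u = h))"

definition has_equalizers :: "('o,'m,'z) lcat_scheme \<Rightarrow> bool" where
  "has_equalizers L \<longleftrightarrow> (\<forall>a\<in>ob L. \<forall>b\<in>ob L. \<forall>f g. f \<in> hom L a b \<and> g \<in> hom L a b \<longrightarrow>
     (\<exists>Eq e. is_equalizer L f g Eq e))"

definition is_monic :: "('o,'m,'z) lcat_scheme \<Rightarrow> 'm \<Rightarrow> bool" where
  "is_monic L m \<longleftrightarrow> m \<in> ar L \<and>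
     (\<forall>g\<in>ar L. \<forall>h\<in>ar L. cd L g = dm L m \<and> cd L h = dm L m \<and> dm L g = dm L h \<and>
        cmp L m g = cmp L m h \<longrightarrow> g = h)"

text \<open>Pullback square: m' (into dom f) is the pullback of m along f, with g : dom m' -> dom m.\<close>
definition is_pullback ::
  "('o,'m,'z) lcat_scheme \<Rightarrow> 'm \<Rightarrow> 'm \<Rightarrow> 'm \<Rightarrow> 'm \<Rightarrow> bool" where
  "is_pullback L m f m' g \<longleftrightarrow> m \<in> ar L \<and> f \<in> ar L \<and> m' \<in> ar L \<and> g \<in> ar L \<and>
     cd L m = cd L f \<and> cd L m' = dm L f \<and> cd L g = dm L m \<and> dm L m' = dm L g \<and>
     cmp L m g = cmp L f m' \<and>
     (\<forall>a\<in>ar L. \<forall>b\<in>ar L. cd L a = dm L f \<and> cd L b = dm L m \<and> dm L a = dm L b \<and>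
        cmp L m b = cmp L f a \<longrightarrow>
        (\<exists>!u. u \<in> hom L (dm L a) (dm L m') \<and> cmp L m' u = a \<and> cmp L g u = b))"

definition liability_category :: "('o,'m,'z) lcat_scheme \<Rightarrow> bool" where
  "liability_category L \<longleftrightarrow>
     is_category L \<and> is_terminal L (trm L) \<and> has_finite_products L \<and> has_equalizers L \<and>
     \<comment> \<open>partial order on each Hom(1,P)\<close>
     (\<forall>P\<in>ob L.
        (\<forall>x\<in>hom L (trm L) P. ordr L P x x) \<and>
        (\<forall>x\<in>hom L (trm L) P. \<forall>y\<in>hom L (trm L) P. ordr L P x y \<and> ordr L P y x \<longrightarrow> x = y) \<and>
        (\<forall>x\<in>hom L (trm L) P. \<forall>y\<in>hom L (trm L) P. \<forall>z\<in>hom L (trm L) P.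
            ordr L P x y \<and> ordr L P y z \<longrightarrow> ordr L P x z)) \<and>
     \<comment> \<open>preserved by postcomposition\<close>
     (\<forall>P\<in>ob L. \<forall>Q\<in>ob L. \<forall>f\<in>hom L P Q. \<forall>x\<in>hom L (trm L) P. \<forall>y\<in>hom L (trm L) P.
        ordr L P x y \<longrightarrow> ordr L Q (cmp L f x) (cmp L f y)) \<and>
     \<comment> \<open>constraint monomorphisms into P, stable under pullback\<close>
     (\<forall>P\<in>ob L. \<forall>m\<in>cons L P. is_monic L m \<and> cd L m = P) \<and>
     (\<forall>P\<in>ob L. \<forall>m\<in>cons L P. \<forall>Q\<in>ob L. \<forall>f\<in>hom L Q P. \<forall>m' g.
        is_pullback L m f m' g \<longrightarrow> m' \<in> cons L Q) \<and>
     \<comment> \<open>bound selectors\<close>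
     (\<forall>P\<in>ob L. \<forall>x\<in>hom L (trm L) P. bsel L P x \<in> cons L P) \<and>
     \<comment> \<open>Hom(1, prod P_i) = prod Hom(1,P_i) as orders (componentwise order), finite families\<close>
     (\<forall>n::nat. \<forall>X Pr pr. (\<forall>i<n. X i \<in> ob L) \<and> is_product L {..<n} X Pr pr \<longrightarrow>
        (\<forall>x\<in>hom L (trm L) Pr. \<forall>y\<in>hom L (trm L) Pr.
           ordr L Pr x y \<longleftrightarrow> (\<forall>i<n. ordr L (X i) (cmp L (pr i) x) (cmp L (pr i) y))))"

record ('v,'e,'o,'m) lnet =
  Vs    :: "'v set"
  Es    :: "'e set"
  src   :: "'e \<Rightarrow> 'v"
  tgt   :: "'e \<Rightarrow> 'v"
  Xo    :: "'v \<Rightarrow> 'o"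
  lam   :: "'e \<Rightarrow> 'm"
  iota  :: "'v \<Rightarrow> 'm"
  delta :: "'e \<Rightarrow> 'm"
  ahat  :: "'v \<Rightarrow> 'm"

text \<open>Chosen product cones used to form the products appearing in the definitions.\<close>
record ('v,'e,'o,'m) pchoice =
  Pobj  :: "'o"
  piP   :: "'v \<Rightarrow> 'm"
  Bobj  :: "'o"                \<comment> \<open>B = prod_e X_(s e)^(lam e)\<close>
  piB   :: "'e \<Rightarrow> 'm"
  Inobj :: "'v \<Rightarrow> 'o"
  piIn  :: "'v \<Rightarrow> 'e \<Rightarrow> 'm"
  XIobj :: "'v \<Rightarrow> 'o"
  pr1   :: "'v \<Rightarrow> 'm"
  pr2   :: "'v \<Rightarrow> 'm"

definition bobj :: "('o,'m,'z) lcat_scheme \<Rightarrow> ('v,'e,'o,'m,'y) lnet_scheme \<Rightarrow> 'e \<Rightarrow> 'o" where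
  "bobj L N e = dm L (bsel L (Xo N (src N e)) (lam N e))"

definition in_edges :: "('v,'e,'o,'m,'y) lnet_scheme \<Rightarrow> 'v \<Rightarrow> 'e set" where
  "in_edges N v = {e \<in> Es N. tgt N e = v}"

definition liability_network ::
  "('o,'m,'z) lcat_scheme \<Rightarrow> ('v,'e,'o,'m,'y) lnet_scheme \<Rightarrow> ('v,'e,'o,'m,'x) pchoice_scheme \<Rightarrow> bool" where
  "liability_network L N K \<longleftrightarrow>
     finite (Vs N) \<and> finite (Es N) \<and>
     (\<forall>e\<in>Es N. src N e \<in> Vs N \<and> tgt N e \<in> Vs N) \<and>
     (\<forall>v\<in>Vs N. Xo N v \<in> ob L) \<and>
     (\<forall>e\<in>Es N. lam N e \<in> hom L (trm L) (Xo N (src N e))) \<and>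
     (\<forall>v\<in>Vs N. iota N v \<in> hom L (trm L) (Xo N v)) \<and>
     (\<forall>e\<in>Es N. delta N e \<in> hom L (Xo N (src N e)) (bobj L N e)) \<and>
     is_product L (Vs N) (Xo N) (Pobj K) (piP K) \<and>
     is_product L (Es N) (bobj L N) (Bobj K) (piB K) \<and>
     (\<forall>v\<in>Vs N. is_product L (in_edges N v) (bobj L N) (Inobj K v) (piIn K v)) \<and>
     (\<forall>v\<in>Vs N. is_binprod L (Xo N v) (Inobj K v) (XIobj K v) (pr1 K v) (pr2 K v)) \<and>
     (\<forall>v\<in>Vs N. ahat N v \<in> hom L (XIobj K v) (Xo N v))"

definition tuple :: "('o,'m,'z) lcat_scheme \<Rightarrow> 'o \<Rightarrow> 'o \<Rightarrow> 'i set \<Rightarrow> ('i \<Rightarrow> 'm) \<Rightarrow> ('i \<Rightarrow> 'm) \<Rightarrow> 'm" where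
  "tuple L Q Pr I pr f = (THE u. u \<in> hom L Q Pr \<and> (\<forall>i\<in>I. cmp L (pr i) u = f i))"

definition pairing :: "('o,'m,'z) lcat_scheme \<Rightarrow> 'o \<Rightarrow> 'o \<Rightarrow> 'm \<Rightarrow> 'm \<Rightarrow> 'm \<Rightarrow> 'm \<Rightarrow> 'm" where
  "pairing L Q Pr p1 p2 f g = (THE u. u \<in> hom L Q Pr \<and> cmp L p1 u = f \<and> cmp L p2 u = g)"

definition bang :: "('o,'m,'z) lcat_scheme \<Rightarrow> 'o \<Rightarrow> 'm" where
  "bang L Q = (THE k. k \<in> hom L Q (trm L))"

text \<open>Partial aggregator alpha_v = ahat_v o (iota_v x id), with 1 x In_v identified with In_v.\<close>
definition partial_agg ::
  "('o,'m,'z) lcat_scheme \<Rightarrow> ('v,'e,'o,'m,'y) lnet_scheme \<Rightarrow> ('v,'e,'o,'m,'x) pchoice_scheme \<Rightarrow> 'v \<Rightarrow> 'm" where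
  "partial_agg L N K v = cmp L (ahat N v)
     (pairing L (Inobj K v) (XIobj K v) (pr1 K v) (pr2 K v)
        (cmp L (iota N v) (bang L (Inobj K v))) (idt L (Inobj K v)))"

definition Dmap :: "('o,'m,'z) lcat_scheme \<Rightarrow> ('v,'e,'o,'m,'y) lnet_scheme \<Rightarrow> ('v,'e,'o,'m,'x) pchoice_scheme \<Rightarrow> 'm" where
  "Dmap L N K = tuple L (Pobj K) (Bobj K) (Es N) (piB K) (\<lambda>e. cmp L (delta N e) (piP K (src N e)))"

definition Amap :: "('o,'m,'z) lcat_scheme \<Rightarrow> ('v,'e,'o,'m,'y) lnet_scheme \<Rightarrow> ('v,'e,'o,'m,'x) pchoice_scheme \<Rightarrow> 'm" where
  "Amap L N K = tuple L (Bobj K) (Pobj K) (Vs N) (piP K)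
     (\<lambda>v. cmp L (partial_agg L N K v)
            (tuple L (Bobj K) (Inobj K v) (in_edges N v) (piIn K v) (piB K)))"

definition clearing_op :: "('o,'m,'z) lcat_scheme \<Rightarrow> ('v,'e,'o,'m,'y) lnet_scheme \<Rightarrow> ('v,'e,'o,'m,'x) pchoice_scheme \<Rightarrow> 'm" where
  "clearing_op L N K = cmp L (Amap L N K) (Dmap L N K)"

definition clearing_push :: "('o,'m,'z) lcat_scheme \<Rightarrow> ('v,'e,'o,'m,'y) lnet_scheme \<Rightarrow> ('v,'e,'o,'m,'x) pchoice_scheme \<Rightarrow> 'm \<Rightarrow> 'm" where
  "clearing_push L N K x = cmp L (clearing_op L N K) x"

definition edge_rel :: "('v,'e,'o,'m,'y) lnet_scheme \<Rightarrow> ('v \<times> 'v) set" where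
  "edge_rel N = {(src N e, tgt N e) | e. e \<in> Es N}"

definition is_dpath :: "('v,'e,'o,'m,'y) lnet_scheme \<Rightarrow> 'e list \<Rightarrow> bool" where
  "is_dpath N es \<longleftrightarrow> set es \<subseteq> Es N \<and>
     (\<forall>i. Suc i < length es \<longrightarrow> tgt N (es ! i) = src N (es ! Suc i))"

definition max_path_len :: "('v,'e,'o,'m,'y) lnet_scheme \<Rightarrow> nat" where
  "max_path_len N = Max (length ` {es. is_dpath N es})"

datatype ('v,'e) hnode = VN 'v | EN 'e | HD 'v | HA 'v
  \<comment> \<open>vertex v, vertex e*, hyperedge h_v^delta, hyperedge h_v^alpha\<close>

definition hyp_nodes :: "('v,'e,'o,'m,'y) lnet_scheme \<Rightarrow> ('v,'e) hnode set" where
  "hyp_nodes N = VN ` Vs N \<union> EN ` Es N \<union> HD ` Vs N \<union> HA ` Vs N"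

definition sheaf_stalk ::
  "('o,'m,'z) lcat_scheme \<Rightarrow> ('v,'e,'o,'m,'y) lnet_scheme \<Rightarrow> ('v,'e,'o,'m,'x) pchoice_scheme \<Rightarrow> ('v,'e) hnode \<Rightarrow> 'o" where
  "sheaf_stalk L N K n = (case n of VN v \<Rightarrow> Xo N v | EN e \<Rightarrow> bobj L N e
                          | HD v \<Rightarrow> Xo N v | HA v \<Rightarrow> Inobj K v)"

text \<open>Non-identity arrows of the incidence category (one per incidence h -> w)
  together with the restriction maps of the liability sheaf.\<close>
definition sheaf_res ::
  "('o,'m,'z) lcat_scheme \<Rightarrow> ('v,'e,'o,'m,'y) lnet_scheme \<Rightarrow> ('v,'e,'o,'m,'x) pchoice_scheme
     \<Rightarrow> (('v,'e) hnode \<times> ('v,'e) hnode \<times> 'm) set" where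
  "sheaf_res L N K =
     {(HD v, VN v, idt L (Xo N v)) | v. v \<in> Vs N} \<union>
     {(HD (src N e), EN e, delta N e) | e. e \<in> Es N} \<union>
     {(HA (tgt N e), EN e, piIn K (tgt N e) e) | e. e \<in> Es N} \<union>
     {(HA v, VN v, partial_agg L N K v) | v. v \<in> Vs N}"

text \<open>Limit of a diagram over a category whose only non-identity arrows are the given
  generating arrows (no composites), as for the incidence category.\<close>
definition is_cone ::
  "('o,'m,'z) lcat_scheme \<Rightarrow> 'n set \<Rightarrow> ('n \<Rightarrow> 'o) \<Rightarrow> ('n \<times> 'n \<times> 'm) set \<Rightarrow> 'o \<Rightarrow> ('n \<Rightarrow> 'm) \<Rightarrow> bool" where
  "is_cone L Nd F R Q c \<longleftrightarrow> Q \<in> ob L \<and> (\<forall>n\<in>Nd. c n \<in> hom L Q (F n)) \<and>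
     (\<forall>(h,w,f)\<in>R. cmp L f (c h) = c w)"

definition is_limit ::
  "('o,'m,'z) lcat_scheme \<Rightarrow> 'n set \<Rightarrow> ('n \<Rightarrow> 'o) \<Rightarrow> ('n \<times> 'n \<times> 'm) set \<Rightarrow> 'o \<Rightarrow> ('n \<Rightarrow> 'm) \<Rightarrow> bool" where
  "is_limit L Nd F R Lim leg \<longleftrightarrow> is_cone L Nd F R Lim leg \<and>
     (\<forall>Q c. is_cone L Nd F R Q c \<longrightarrow>
        (\<exists>!u. u \<in> hom L Q Lim \<and> (\<forall>n\<in>Nd. cmp L (leg n) u = c n)))"

end

theory Submission
  imports Defs
begin

lemma cat_comp:
  assumes "is_category L" "f \<in> hom L a b" "g \<in> hom L b c"
  shows "cmp L g f \<in> hom L a c"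
  using assms unfolding is_category_def hom_def by auto

lemma cat_assoc:
  assumes "is_category L" "f \<in> hom L a b" "g \<in> hom L b c" "h \<in> hom L c d"
  shows "cmp L h (cmp L g f) = cmp L (cmp L h g) f"
  using assms unfolding is_category_def hom_def by auto

lemma cat_id: "is_category L \<Longrightarrow> a \<in> ob L \<Longrightarrow> idt L a \<in> hom L a a"
  unfolding is_category_def by auto

lemma cat_idl: "is_category L \<Longrightarrow> f \<in> hom L a b \<Longrightarrow> cmp L (idt L b) f = f"
  unfolding is_category_def hom_def by auto

lemma hom_ob: "is_category L \<Longrightarrow> f \<in> hom L a b \<Longrightarrow> a \<in> ob L \<and> b \<in> ob L"
  unfolding is_category_def hom_def by auto

lemma prod_ob: "is_product L I X Pr pr \<Longrightarrow> Pr \<in> ob L"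
  by (simp add: is_product_def)

lemma prod_pr: "is_product L I X Pr pr \<Longrightarrow> i \<in> I \<Longrightarrow> pr i \<in> hom L Pr (X i)"
  by (simp add: is_product_def)

lemma prod_univ:
  assumes "is_product L I X Pr pr" "Q \<in> ob L" "\<And>i. i \<in> I \<Longrightarrow> f i \<in> hom L Q (X i)"
  shows "\<exists>!u. u \<in> hom L Q Pr \<and> (\<forall>i\<in>I. cmp L (pr i) u = f i)"
  using assms unfolding is_product_def by blast

lemma prod_tuple:
  assumes "is_product L I X Pr pr" "Q \<in> ob L" "\<And>i. i \<in> I \<Longrightarrow> f i \<in> hom L Q (X i)"
  shows "tuple L Q Pr I pr f \<in> hom L Q Pr \<and> (\<forall>i\<in>I. cmp L (pr i) (tuple L Q Pr I pr f) = f i)"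
  using theI'[OF prod_univ[OF assms]] unfolding tuple_def .

lemma prod_ext:
  assumes C: "is_category L" and P: "is_product L I X Pr pr" and u: "u \<in> hom L Q Pr"
    and u': "u' \<in> hom L Q Pr" and eq: "\<And>i. i \<in> I \<Longrightarrow> cmp L (pr i) u = cmp L (pr i) u'"
  shows "u = u'"
proof -
  have Q: "Q \<in> ob L" using hom_ob[OF C u] by simp
  have "\<exists>!w. w \<in> hom L Q Pr \<and> (\<forall>i\<in>I. cmp L (pr i) w = cmp L (pr i) u)"
    by (rule prod_univ[OF P Q]) (rule cat_comp[OF C u prod_pr[OF P]])
  then show ?thesis using u u' eq by metis
qed

lemma pairing_hom:
  assumes "is_binprod L A B Pr p1 p2" "Q \<in> ob L" "f \<in> hom L Q A" "g \<in> hom L Q B"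
  shows "pairing L Q Pr p1 p2 f g \<in> hom L Q Pr"
proof -
  have "\<exists>!u. u \<in> hom L Q Pr \<and> cmp L p1 u = f \<and> cmp L p2 u = g"
    using assms unfolding is_binprod_def by blast
  from theI'[OF this] show ?thesis unfolding pairing_def by blast
qed

lemma bang_hom:
  assumes "is_terminal L (trm L)" "Q \<in> ob L"
  shows "bang L Q \<in> hom L Q (trm L)"
proof -
  have "\<exists>!k. k \<in> hom L Q (trm L)" using assms unfolding is_terminal_def by blast
  from theI'[OF this] show ?thesis unfolding bang_def .
qed

lemma funpow_fix: "f x = x \<Longrightarrow> (f ^^ n) x = x"
  by (induction n) auto

locale LN =
  fixes L :: "('o,'m) lcat" and N :: "('v,'e,'o,'m) lnet" and K :: "('v,'e,'o,'m) pchoice"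
  assumes LC: "liability_category L" and NW: "liability_network L N K"
begin

lemmas NWs = NW[unfolded liability_network_def]

lemmas LCs = LC[unfolded liability_category_def]
lemma cat: "is_category L" by (rule conjunct1[OF LCs])
lemma trmax: "is_terminal L (trm L)" by (rule conjunct1[OF conjunct2[OF LCs]])
lemma trm_ob: "trm L \<in> ob L" using trmax unfolding is_terminal_def by blast
lemma finE: "finite (Es N)" using NWs by simp
lemma src_V: "e \<in> Es N \<Longrightarrow> src N e \<in> Vs N" using NWs by simp
lemma tgt_V: "e \<in> Es N \<Longrightarrow> tgt N e \<in> Vs N" using NWs by simp
lemma iota_hom: "v \<in> Vs N \<Longrightarrow> iota N v \<in> hom L (trm L) (Xo N v)"
  using NWs by simp
lemma delta_hom: "e \<in> Es N \<Longrightarrow> delta N e \<in> hom L (Xo N (src N e)) (bobj L N e)"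
  using NWs by simp
lemma prodP: "is_product L (Vs N) (Xo N) (Pobj K) (piP K)"
  using NWs by simp
lemma prodB: "is_product L (Es N) (bobj L N) (Bobj K) (piB K)"
  using NWs by simp
lemma prodIn: "v \<in> Vs N \<Longrightarrow> is_product L (in_edges N v) (bobj L N) (Inobj K v) (piIn K v)"
  using NWs by simp
lemma binp: "v \<in> Vs N \<Longrightarrow> is_binprod L (Xo N v) (Inobj K v) (XIobj K v) (pr1 K v) (pr2 K v)"
  using NWs by simp
lemma ahat_hom: "v \<in> Vs N \<Longrightarrow> ahat N v \<in> hom L (XIobj K v) (Xo N v)"
  using NWs by simp

lemma inE: "e \<in> in_edges N v \<Longrightarrow> e \<in> Es N \<and> tgt N e = v"
  by (simp add: in_edges_def)

lemma P_ob: "Pobj K \<in> ob L" by (rule prod_ob[OF prodP])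
lemma B_ob: "Bobj K \<in> ob L" by (rule prod_ob[OF prodB])
lemma In_ob: "v \<in> Vs N \<Longrightarrow> Inobj K v \<in> ob L" by (rule prod_ob[OF prodIn])
lemma piP_hom: "v \<in> Vs N \<Longrightarrow> piP K v \<in> hom L (Pobj K) (Xo N v)" by (rule prod_pr[OF prodP])
lemma piB_hom: "e \<in> Es N \<Longrightarrow> piB K e \<in> hom L (Bobj K) (bobj L N e)" by (rule prod_pr[OF prodB])
lemma piIn_hom: "v \<in> Vs N \<Longrightarrow> e \<in> in_edges N v \<Longrightarrow> piIn K v e \<in> hom L (Inobj K v) (bobj L N e)"
  by (rule prod_pr[OF prodIn])

lemma pa_hom: assumes v: "v \<in> Vs N" shows "partial_agg L N K v \<in> hom L (Inobj K v) (Xo N v)"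
proof -
  have In: "Inobj K v \<in> ob L" by (rule In_ob[OF v])
  have b: "bang L (Inobj K v) \<in> hom L (Inobj K v) (trm L)" by (rule bang_hom[OF trmax In])
  have i: "cmp L (iota N v) (bang L (Inobj K v)) \<in> hom L (Inobj K v) (Xo N v)"
    by (rule cat_comp[OF cat b iota_hom[OF v]])
  have pr: "pairing L (Inobj K v) (XIobj K v) (pr1 K v) (pr2 K v)
        (cmp L (iota N v) (bang L (Inobj K v))) (idt L (Inobj K v)) \<in> hom L (Inobj K v) (XIobj K v)"
    by (rule pairing_hom[OF binp[OF v] In i cat_id[OF cat In]])
  show ?thesis unfolding partial_agg_def by (rule cat_comp[OF cat pr ahat_hom[OF v]])
qed

lemma dpe_hom: "e \<in> Es N \<Longrightarrow> cmp L (delta N e) (piP K (src N e)) \<in> hom L (Pobj K) (bobj L N e)"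
  by (rule cat_comp[OF cat piP_hom[OF src_V] delta_hom])

lemma D_prop: "Dmap L N K \<in> hom L (Pobj K) (Bobj K) \<and>
   (\<forall>e\<in>Es N. cmp L (piB K e) (Dmap L N K) = cmp L (delta N e) (piP K (src N e)))"
  unfolding Dmap_def by (rule prod_tuple[OF prodB P_ob dpe_hom])

definition tB where "tB v = tuple L (Bobj K) (Inobj K v) (in_edges N v) (piIn K v) (piB K)"

lemma tB_prop: "v \<in> Vs N \<Longrightarrow> tB v \<in> hom L (Bobj K) (Inobj K v) \<and>
   (\<forall>e\<in>in_edges N v. cmp L (piIn K v e) (tB v) = piB K e)"
  unfolding tB_def by (rule prod_tuple[OF prodIn B_ob]) (auto intro: piB_hom dest: inE)

lemma A_prop: "Amap L N K \<in> hom L (Bobj K) (Pobj K) \<and>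
   (\<forall>v\<in>Vs N. cmp L (piP K v) (Amap L N K) = cmp L (partial_agg L N K v) (tB v))"
  unfolding Amap_def tB_def[symmetric]
  by (rule prod_tuple[OF prodP B_ob]) (rule cat_comp[OF cat _ pa_hom], auto dest: tB_prop)

lemma Phi_hom: "clearing_op L N K \<in> hom L (Pobj K) (Pobj K)"
  unfolding clearing_op_def using cat_comp[OF cat] D_prop A_prop by blast

lemma push_hom: "x \<in> hom L (trm L) (Pobj K) \<Longrightarrow> clearing_push L N K x \<in> hom L (trm L) (Pobj K)"
  unfolding clearing_push_def using cat_comp[OF cat _ Phi_hom] by blast

lemma pow_hom: "x \<in> hom L (trm L) (Pobj K) \<Longrightarrow> (clearing_push L N K ^^ n) x \<in> hom L (trm L) (Pobj K)"
  by (induction n) (auto intro: push_hom)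

lemma Phi_comp:
  assumes v: "v \<in> Vs N" and x: "x \<in> hom L (trm L) (Pobj K)"
    and W: "W \<in> hom L (trm L) (Inobj K v)"
    and WE: "\<And>e. e \<in> in_edges N v \<Longrightarrow> cmp L (piIn K v e) W = cmp L (delta N e) (cmp L (piP K (src N e)) x)"
  shows "cmp L (piP K v) (clearing_push L N K x) = cmp L (partial_agg L N K v) W"
proof -
  have D: "Dmap L N K \<in> hom L (Pobj K) (Bobj K)" using D_prop by blast
  have A: "Amap L N K \<in> hom L (Bobj K) (Pobj K)" using A_prop by blast
  have Dx: "cmp L (Dmap L N K) x \<in> hom L (trm L) (Bobj K)" by (rule cat_comp[OF cat x D])
  have tB: "tB v \<in> hom L (Bobj K) (Inobj K v)" using tB_prop[OF v] by blast
  have tBDx: "cmp L (tB v) (cmp L (Dmap L N K) x) \<in> hom L (trm L) (Inobj K v)"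
    by (rule cat_comp[OF cat Dx tB])
  have eqW: "cmp L (tB v) (cmp L (Dmap L N K) x) = W"
  proof (rule prod_ext[OF cat prodIn[OF v] tBDx W])
    fix e assume e: "e \<in> in_edges N v"
    have eE: "e \<in> Es N" using inE[OF e] by blast
    have "cmp L (piIn K v e) (cmp L (tB v) (cmp L (Dmap L N K) x))
        = cmp L (cmp L (piIn K v e) (tB v)) (cmp L (Dmap L N K) x)"
      by (rule cat_assoc[OF cat Dx tB piIn_hom[OF v e]])
    also have "\<dots> = cmp L (piB K e) (cmp L (Dmap L N K) x)" using tB_prop[OF v] e by simp
    also have "\<dots> = cmp L (cmp L (piB K e) (Dmap L N K)) x"
      by (rule cat_assoc[OF cat x D piB_hom[OF eE]])
    also have "\<dots> = cmp L (cmp L (delta N e) (piP K (src N e))) x" using D_prop eE by simp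
    also have "\<dots> = cmp L (delta N e) (cmp L (piP K (src N e)) x)"
      by (rule cat_assoc[OF cat x piP_hom[OF src_V[OF eE]] delta_hom[OF eE], symmetric])
    also have "\<dots> = cmp L (piIn K v e) W" using WE[OF e] by simp
    finally show "cmp L (piIn K v e) (cmp L (tB v) (cmp L (Dmap L N K) x)) = cmp L (piIn K v e) W" .
  qed
  have "cmp L (piP K v) (clearing_push L N K x)
      = cmp L (piP K v) (cmp L (cmp L (Amap L N K) (Dmap L N K)) x)"
    unfolding clearing_push_def clearing_op_def ..
  also have "\<dots> = cmp L (piP K v) (cmp L (Amap L N K) (cmp L (Dmap L N K) x))"
    using cat_assoc[OF cat x D A] by simp
  also have "\<dots> = cmp L (cmp L (piP K v) (Amap L N K)) (cmp L (Dmap L N K) x)"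
    by (rule cat_assoc[OF cat Dx A piP_hom[OF v]])
  also have "\<dots> = cmp L (cmp L (partial_agg L N K v) (tB v)) (cmp L (Dmap L N K) x)"
    using A_prop v by simp
  also have "\<dots> = cmp L (partial_agg L N K v) (cmp L (tB v) (cmp L (Dmap L N K) x))"
    by (rule cat_assoc[OF cat Dx tB pa_hom[OF v], symmetric])
  also have "\<dots> = cmp L (partial_agg L N K v) W" using eqW by simp
  finally show ?thesis .
qed

lemma locality:
  assumes v: "v \<in> Vs N" and x: "x \<in> hom L (trm L) (Pobj K)" and y: "y \<in> hom L (trm L) (Pobj K)"
    and eq: "\<And>e. e \<in> in_edges N v \<Longrightarrow> cmp L (piP K (src N e)) x = cmp L (piP K (src N e)) y"
  shows "cmp L (piP K v) (clearing_push L N K x) = cmp L (piP K v) (clearing_push L N K y)"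
proof -
  define W where "W = tuple L (trm L) (Inobj K v) (in_edges N v) (piIn K v)
      (\<lambda>e. cmp L (delta N e) (cmp L (piP K (src N e)) x))"
  have "W \<in> hom L (trm L) (Inobj K v) \<and> (\<forall>e\<in>in_edges N v. cmp L (piIn K v e) W
      = cmp L (delta N e) (cmp L (piP K (src N e)) x))"
    unfolding W_def
  proof (rule prod_tuple[OF prodIn[OF v] trm_ob])
    fix e assume e: "e \<in> in_edges N v"
    then have eE: "e \<in> Es N" using inE by blast
    show "cmp L (delta N e) (cmp L (piP K (src N e)) x) \<in> hom L (trm L) (bobj L N e)"
      by (rule cat_comp[OF cat cat_comp[OF cat x piP_hom[OF src_V[OF eE]]] delta_hom[OF eE]])
  qed
  then have W: "W \<in> hom L (trm L) (Inobj K v)"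
    and WE: "\<And>e. e \<in> in_edges N v \<Longrightarrow> cmp L (piIn K v e) W = cmp L (delta N e) (cmp L (piP K (src N e)) x)"
    by auto
  have "cmp L (piP K v) (clearing_push L N K x) = cmp L (partial_agg L N K v) W"
    by (rule Phi_comp[OF v x W WE])
  moreover have "cmp L (piP K v) (clearing_push L N K y) = cmp L (partial_agg L N K v) W"
    by (rule Phi_comp[OF v y W]) (simp add: WE eq)
  ultimately show ?thesis by simp
qed

lemma dpath_snoc:
  assumes "is_dpath N es" "e \<in> Es N" "es \<noteq> []" "tgt N (last es) = src N e"
  shows "is_dpath N (es @ [e])"
  unfolding is_dpath_def
proof (intro conjI allI impI)
  show "set (es @ [e]) \<subseteq> Es N" using assms unfolding is_dpath_def by auto
  fix i assume i: "Suc i < length (es @ [e])"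
  show "tgt N ((es @ [e]) ! i) = src N ((es @ [e]) ! Suc i)"
  proof (cases "Suc i < length es")
    case True
    then show ?thesis using assms(1) unfolding is_dpath_def by (simp add: nth_append)
  next
    case False
    then have "i = length es - 1" "Suc i = length es" using i by auto
    then show ?thesis using assms(3,4) by (simp add: nth_append last_conv_nth)
  qed
qed

lemma core:
  "\<forall>v\<in>Vs N. (\<forall>es. is_dpath N es \<and> es \<noteq> [] \<and> tgt N (last es) = v \<longrightarrow> length es \<le> k) \<longrightarrow>
     (\<forall>x\<in>hom L (trm L) (Pobj K). \<forall>y\<in>hom L (trm L) (Pobj K).
        cmp L (piP K v) ((clearing_push L N K ^^ Suc k) x) = cmp L (piP K v) ((clearing_push L N K ^^ Suc k) y))"
proof (induction k)
  case 0
  show ?case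
  proof (intro ballI impI)
    fix v x y assume v: "v \<in> Vs N" and H: "\<forall>es. is_dpath N es \<and> es \<noteq> [] \<and> tgt N (last es) = v \<longrightarrow> length es \<le> 0"
      and x: "x \<in> hom L (trm L) (Pobj K)" and y: "y \<in> hom L (trm L) (Pobj K)"
    have emp: "in_edges N v = {}"
    proof (rule ccontr)
      assume "in_edges N v \<noteq> {}"
      then obtain e where "e \<in> in_edges N v" by blast
      then have "e \<in> Es N" "tgt N e = v" using inE by auto
      then have "is_dpath N [e] \<and> [e] \<noteq> [] \<and> tgt N (last [e]) = v" by (simp add: is_dpath_def)
      then show False using H by fastforce
    qed
    show "cmp L (piP K v) ((clearing_push L N K ^^ Suc 0) x) = cmp L (piP K v) ((clearing_push L N K ^^ Suc 0) y)"
      using locality[OF v x y] emp by simp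
  qed
next
  case (Suc k)
  show ?case
  proof (intro ballI impI)
    fix v x y assume v: "v \<in> Vs N" and H: "\<forall>es. is_dpath N es \<and> es \<noteq> [] \<and> tgt N (last es) = v \<longrightarrow> length es \<le> Suc k"
      and x: "x \<in> hom L (trm L) (Pobj K)" and y: "y \<in> hom L (trm L) (Pobj K)"
    have "cmp L (piP K v) (clearing_push L N K ((clearing_push L N K ^^ Suc k) x))
        = cmp L (piP K v) (clearing_push L N K ((clearing_push L N K ^^ Suc k) y))"
    proof (rule locality[OF v pow_hom[OF x] pow_hom[OF y]])
      fix e assume e: "e \<in> in_edges N v"
      then have eE: "e \<in> Es N" and te: "tgt N e = v" using inE by auto
      have "\<forall>es. is_dpath N es \<and> es \<noteq> [] \<and> tgt N (last es) = src N e \<longrightarrow> length es \<le> k"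
      proof (intro allI impI)
        fix es assume es: "is_dpath N es \<and> es \<noteq> [] \<and> tgt N (last es) = src N e"
        then have "is_dpath N (es @ [e])" using dpath_snoc eE by blast
        then have "length (es @ [e]) \<le> Suc k" using H te by auto
        then show "length es \<le> k" by simp
      qed
      then show "cmp L (piP K (src N e)) ((clearing_push L N K ^^ Suc k) x) =
                 cmp L (piP K (src N e)) ((clearing_push L N K ^^ Suc k) y)"
        using Suc.IH src_V[OF eE] x y by blast
    qed
    then show "cmp L (piP K v) ((clearing_push L N K ^^ Suc (Suc k)) x) =
               cmp L (piP K v) ((clearing_push L N K ^^ Suc (Suc k)) y)" by simp
  qed
qed

lemma dpath_trancl:
  assumes "is_dpath N es"
  shows "i < j \<Longrightarrow> j < length es \<Longrightarrow> (src N (es!i), src N (es!j)) \<in> (edge_rel N)\<^sup>+"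
proof (induction j)
  case 0 then show ?case by simp
next
  case (Suc j)
  have jE: "es ! j \<in> Es N" using assms Suc.prems unfolding is_dpath_def by (meson Suc_lessD nth_mem subsetD)
  have ed: "(src N (es!j), src N (es ! Suc j)) \<in> edge_rel N"
    using assms Suc.prems jE unfolding is_dpath_def edge_rel_def by (metis (mono_tags, lifting) mem_Collect_eq)
  show ?case
  proof (cases "i = j")
    case True then show ?thesis using ed by auto
  next
    case False
    then have "(src N (es!i), src N (es!j)) \<in> (edge_rel N)\<^sup>+" using Suc by auto
    then show ?thesis using ed by (rule trancl_into_trancl)
  qed
qed

lemma dpath_distinct:
  assumes AC: "acyclic (edge_rel N)" and p: "is_dpath N es"
  shows "distinct es"
  unfolding distinct_conv_nth
proof (intro allI impI)
  fix i j assume i: "i < length es" and j: "j < length es" and ij: "i \<noteq> j"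
  show "es ! i \<noteq> es ! j"
  proof
    assume eq: "es ! i = es ! j"
    show False
    proof (cases "i < j")
      case True
      then have "(src N (es!i), src N (es!j)) \<in> (edge_rel N)\<^sup>+" using dpath_trancl[OF p] j by blast
      then show False using AC eq unfolding acyclic_def by simp
    next
      case False
      then have "j < i" using ij by simp
      then have "(src N (es!j), src N (es!i)) \<in> (edge_rel N)\<^sup>+" using dpath_trancl[OF p] i by blast
      then show False using AC eq unfolding acyclic_def by simp
    qed
  qed
qed

lemma dpaths_finite:
  assumes AC: "acyclic (edge_rel N)"
  shows "finite {es. is_dpath N es}"
proof (rule finite_subset)
  show "{es. is_dpath N es} \<subseteq> {xs. set xs \<subseteq> Es N \<and> length xs \<le> card (Es N)}"
  proof
    fix es assume "es \<in> {es. is_dpath N es}"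
    then have p: "is_dpath N es" by simp
    then have s: "set es \<subseteq> Es N" unfolding is_dpath_def by simp
    have "length es = card (set es)" using distinct_card[OF dpath_distinct[OF AC p]] by simp
    also have "\<dots> \<le> card (Es N)" by (rule card_mono[OF finE s])
    finally show "es \<in> {xs. set xs \<subseteq> Es N \<and> length xs \<le> card (Es N)}" using s by simp
  qed
  show "finite {xs. set xs \<subseteq> Es N \<and> length xs \<le> card (Es N)}"
    by (rule finite_lists_length_le[OF finE])
qed

lemma len_le_max:
  assumes AC: "acyclic (edge_rel N)" and p: "is_dpath N es"
  shows "length es \<le> max_path_len N"
  unfolding max_path_len_def
  by (rule Max_ge) (use dpaths_finite[OF AC] p in auto)

lemma constancy:
  assumes AC: "acyclic (edge_rel N)"
    and x: "x \<in> hom L (trm L) (Pobj K)" and y: "y \<in> hom L (trm L) (Pobj K)"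
  shows "(clearing_push L N K ^^ Suc (max_path_len N)) x = (clearing_push L N K ^^ Suc (max_path_len N)) y"
proof (rule prod_ext[OF cat prodP pow_hom[OF x] pow_hom[OF y]])
  fix v assume v: "v \<in> Vs N"
  show "cmp L (piP K v) ((clearing_push L N K ^^ Suc (max_path_len N)) x) =
        cmp L (piP K v) ((clearing_push L N K ^^ Suc (max_path_len N)) y)"
    using core[of "max_path_len N"] v x y len_le_max[OF AC] by blast
qed

definition x0 where "x0 = tuple L (trm L) (Pobj K) (Vs N) (piP K) (iota N)"

lemma x0_hom: "x0 \<in> hom L (trm L) (Pobj K)"
  using prod_tuple[OF prodP trm_ob iota_hom] unfolding x0_def by blast

definition xs where "xs = (clearing_push L N K ^^ Suc (max_path_len N)) x0"

lemma xs_hom: "xs \<in> hom L (trm L) (Pobj K)"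
  unfolding xs_def by (rule pow_hom[OF x0_hom])

lemma xs_fix:
  assumes AC: "acyclic (edge_rel N)"
  shows "clearing_push L N K xs = xs"
proof -
  have "clearing_push L N K xs = (clearing_push L N K ^^ Suc (max_path_len N)) (clearing_push L N K x0)"
    unfolding xs_def by (simp del: funpow.simps add: funpow_Suc_right funpow_swap1)
  also have "\<dots> = xs" unfolding xs_def by (rule constancy[OF AC push_hom[OF x0_hom] x0_hom])
  finally show ?thesis .
qed

lemma part1:
  assumes AC: "acyclic (edge_rel N)"
  shows "\<exists>xs. xs \<in> hom L (trm L) (Pobj K) \<and> clearing_push L N K xs = xs \<and>
            (\<forall>x\<in>hom L (trm L) (Pobj K).
               (clearing_push L N K ^^ Suc (max_path_len N)) x = xs)"
  using xs_hom xs_fix[OF AC] constancy[OF AC _ x0_hom] unfolding xs_def by blast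


lemma VN_in: "v \<in> Vs N \<Longrightarrow> VN v \<in> hyp_nodes N" by (simp add: hyp_nodes_def)
lemma HD_in: "v \<in> Vs N \<Longrightarrow> HD v \<in> hyp_nodes N" by (simp add: hyp_nodes_def)
lemma HA_in: "v \<in> Vs N \<Longrightarrow> HA v \<in> hyp_nodes N" by (simp add: hyp_nodes_def)
lemma EN_in: "e \<in> Es N \<Longrightarrow> EN e \<in> hyp_nodes N" by (simp add: hyp_nodes_def)

lemma R1: "v \<in> Vs N \<Longrightarrow> (HD v, VN v, idt L (Xo N v)) \<in> sheaf_res L N K"
  unfolding sheaf_res_def by blast
lemma R2: "e \<in> Es N \<Longrightarrow> (HD (src N e), EN e, delta N e) \<in> sheaf_res L N K"
  unfolding sheaf_res_def by blast
lemma R3: "e \<in> Es N \<Longrightarrow> (HA (tgt N e), EN e, piIn K (tgt N e) e) \<in> sheaf_res L N K"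
  unfolding sheaf_res_def by blast
lemma R4: "v \<in> Vs N \<Longrightarrow> (HA v, VN v, partial_agg L N K v) \<in> sheaf_res L N K"
  unfolding sheaf_res_def by blast

lemma Xob: "v \<in> Vs N \<Longrightarrow> Xo N v \<in> ob L" using NWs by simp

lemma sheaf_unique:
  assumes AC: "acyclic (edge_rel N)"
    and LIM: "is_limit L (hyp_nodes N) (sheaf_stalk L N K) (sheaf_res L N K) Lim leg"
  shows "\<exists>!\<sigma>. \<sigma> \<in> hom L (trm L) Lim"
proof -
  define a where "a e = cmp L (delta N e) (cmp L (piP K (src N e)) xs)" for e
  have a_hom: "a e \<in> hom L (trm L) (bobj L N e)" if e: "e \<in> Es N" for e
    unfolding a_def by (rule cat_comp[OF cat cat_comp[OF cat xs_hom piP_hom[OF src_V[OF e]]] delta_hom[OF e]])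
  define w where "w v = tuple L (trm L) (Inobj K v) (in_edges N v) (piIn K v) a" for v
  have w: "w v \<in> hom L (trm L) (Inobj K v) \<and> (\<forall>e\<in>in_edges N v. cmp L (piIn K v e) (w v) = a e)"
    if v: "v \<in> Vs N" for v
    unfolding w_def by (rule prod_tuple[OF prodIn[OF v] trm_ob]) (auto intro: a_hom dest: inE)
  define c where "c n = (case n of VN v \<Rightarrow> cmp L (piP K v) xs | HD v \<Rightarrow> cmp L (piP K v) xs
      | EN e \<Rightarrow> a e | HA v \<Rightarrow> w v)" for n
  have xsv: "cmp L (piP K v) xs \<in> hom L (trm L) (Xo N v)" if v: "v \<in> Vs N" for v
    by (rule cat_comp[OF cat xs_hom piP_hom[OF v]])
  have cone: "is_cone L (hyp_nodes N) (sheaf_stalk L N K) (sheaf_res L N K) (trm L) c"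
    unfolding is_cone_def
  proof (intro conjI ballI)
    show "trm L \<in> ob L" by (rule trm_ob)
  next
    fix n assume "n \<in> hyp_nodes N"
    then show "c n \<in> hom L (trm L) (sheaf_stalk L N K n)"
      unfolding hyp_nodes_def using xsv a_hom w by (auto simp: c_def sheaf_stalk_def)
  next
    fix t assume "t \<in> sheaf_res L N K"
    then consider (r1) v where "v \<in> Vs N" "t = (HD v, VN v, idt L (Xo N v))"
      | (r2) e where "e \<in> Es N" "t = (HD (src N e), EN e, delta N e)"
      | (r3) e where "e \<in> Es N" "t = (HA (tgt N e), EN e, piIn K (tgt N e) e)"
      | (r4) v where "v \<in> Vs N" "t = (HA v, VN v, partial_agg L N K v)"
      unfolding sheaf_res_def by blast
    then show "case t of (h, wa, f) \<Rightarrow> cmp L f (c h) = c wa"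
    proof cases
      case (r1 v) then show ?thesis using cat_idl[OF cat xsv[OF r1(1)]] by (simp add: c_def)
    next
      case (r2 e) then show ?thesis by (simp add: c_def a_def)
    next
      case (r3 e)
      have "e \<in> in_edges N (tgt N e)" using r3(1) by (simp add: in_edges_def)
      then show ?thesis using r3 w[OF tgt_V[OF r3(1)]] by (simp add: c_def)
    next
      case (r4 v)
      have "cmp L (piP K v) (clearing_push L N K xs) = cmp L (partial_agg L N K v) (w v)"
        by (rule Phi_comp[OF r4(1) xs_hom]) (use w[OF r4(1)] in \<open>auto simp: a_def\<close>)
      then show ?thesis using r4 xs_fix[OF AC] by (simp add: c_def)
    qed
  qed
  have lc: "is_cone L (hyp_nodes N) (sheaf_stalk L N K) (sheaf_res L N K) Lim leg"
    using LIM unfolding is_limit_def by blast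
  have "\<exists>!u. u \<in> hom L (trm L) Lim \<and> (\<forall>n\<in>hyp_nodes N. cmp L (leg n) u = c n)"
    using LIM cone unfolding is_limit_def by blast
  then obtain u where u: "u \<in> hom L (trm L) Lim" "\<forall>n\<in>hyp_nodes N. cmp L (leg n) u = c n"
    and uniq: "\<And>u'. u' \<in> hom L (trm L) Lim \<Longrightarrow> (\<forall>n\<in>hyp_nodes N. cmp L (leg n) u' = c n) \<Longrightarrow> u' = u"
    by blast
  show ?thesis
  proof (rule ex1I[of _ u])
    show "u \<in> hom L (trm L) Lim" by (rule u(1))
  next
    fix \<sigma> assume \<sigma>: "\<sigma> \<in> hom L (trm L) Lim"
    define c' where "c' n = cmp L (leg n) \<sigma>" for n
    have legh: "leg n \<in> hom L Lim (sheaf_stalk L N K n)" if "n \<in> hyp_nodes N" for n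
      using lc that unfolding is_cone_def by blast
    have c'h: "c' n \<in> hom L (trm L) (sheaf_stalk L N K n)" if "n \<in> hyp_nodes N" for n
      unfolding c'_def by (rule cat_comp[OF cat \<sigma> legh[OF that]])
    have legrel: "cmp L f (leg h) = leg wn" if "(h, wn, f) \<in> sheaf_res L N K" for h wn f
      using lc that unfolding is_cone_def by fastforce
    have rel: "cmp L f (c' h) = c' wn"
      if "(h, wn, f) \<in> sheaf_res L N K" "h \<in> hyp_nodes N" "f \<in> hom L (sheaf_stalk L N K h) X" for h wn f X
    proof -
      have "cmp L f (c' h) = cmp L (cmp L f (leg h)) \<sigma>"
        unfolding c'_def by (rule cat_assoc[OF cat \<sigma> legh[OF that(2)] that(3)])
      then show ?thesis using legrel[OF that(1)] by (simp add: c'_def)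
    qed
    have r1: "c' (VN v) = c' (HD v)" if v: "v \<in> Vs N" for v
    proof -
      have "cmp L (idt L (Xo N v)) (c' (HD v)) = c' (VN v)"
        by (rule rel[OF R1[OF v] HD_in[OF v]]) (simp only: sheaf_stalk_def hnode.case, rule cat_id[OF cat Xob[OF v]])
      moreover have "cmp L (idt L (Xo N v)) (c' (HD v)) = c' (HD v)"
        using cat_idl[OF cat c'h[OF HD_in[OF v]]] by (simp add: sheaf_stalk_def)
      ultimately show ?thesis by simp
    qed
    have r2: "cmp L (delta N e) (c' (HD (src N e))) = c' (EN e)" if e: "e \<in> Es N" for e
      by (rule rel[OF R2[OF e] HD_in[OF src_V[OF e]]]) (simp only: sheaf_stalk_def hnode.case, rule delta_hom[OF e])
    have r3: "cmp L (piIn K (tgt N e) e) (c' (HA (tgt N e))) = c' (EN e)" if e: "e \<in> Es N" for e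
    proof (rule rel[OF R3[OF e] HA_in[OF tgt_V[OF e]]])
      have "e \<in> in_edges N (tgt N e)" using e by (simp add: in_edges_def)
      then show "piIn K (tgt N e) e \<in> hom L (sheaf_stalk L N K (HA (tgt N e))) (bobj L N e)"
        using piIn_hom[OF tgt_V[OF e]] by (simp add: sheaf_stalk_def)
    qed
    have r4: "cmp L (partial_agg L N K v) (c' (HA v)) = c' (VN v)" if v: "v \<in> Vs N" for v
      by (rule rel[OF R4[OF v] HA_in[OF v]]) (simp only: sheaf_stalk_def hnode.case, rule pa_hom[OF v])
    define y where "y = tuple L (trm L) (Pobj K) (Vs N) (piP K) (\<lambda>v. c' (VN v))"
    have y: "y \<in> hom L (trm L) (Pobj K) \<and> (\<forall>v\<in>Vs N. cmp L (piP K v) y = c' (VN v))"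
      unfolding y_def by (rule prod_tuple[OF prodP trm_ob]) (use c'h[OF VN_in] in \<open>auto simp: sheaf_stalk_def\<close>)
    have yfix: "clearing_push L N K y = y"
    proof (rule prod_ext[OF cat prodP push_hom])
      show "y \<in> hom L (trm L) (Pobj K)" using y by blast
      then show "y \<in> hom L (trm L) (Pobj K)" .
      fix v assume v: "v \<in> Vs N"
      have "cmp L (piP K v) (clearing_push L N K y) = cmp L (partial_agg L N K v) (c' (HA v))"
      proof (rule Phi_comp[OF v])
        show "y \<in> hom L (trm L) (Pobj K)" using y by blast
        show "c' (HA v) \<in> hom L (trm L) (Inobj K v)" using c'h[OF HA_in[OF v]] by (simp add: sheaf_stalk_def)
        fix e assume e: "e \<in> in_edges N v"
        then have eE: "e \<in> Es N" and te: "tgt N e = v" using inE by auto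
        have "cmp L (piIn K v e) (c' (HA v)) = c' (EN e)" using r3[OF eE] te by simp
        also have "\<dots> = cmp L (delta N e) (c' (HD (src N e)))" using r2[OF eE] by simp
        also have "\<dots> = cmp L (delta N e) (cmp L (piP K (src N e)) y)"
          using r1[OF src_V[OF eE]] y src_V[OF eE] by simp
        finally show "cmp L (piIn K v e) (c' (HA v)) = cmp L (delta N e) (cmp L (piP K (src N e)) y)" .
      qed
      also have "\<dots> = cmp L (piP K v) y" using r4[OF v] y v by simp
      finally show "cmp L (piP K v) (clearing_push L N K y) = cmp L (piP K v) y" .
    qed
    have yxs: "y = xs"
    proof -
      have "y = (clearing_push L N K ^^ Suc (max_path_len N)) y" by (rule funpow_fix[of "clearing_push L N K" y, OF yfix, symmetric])
      also have "\<dots> = xs" unfolding xs_def by (rule constancy[OF AC]) (use y x0_hom in auto)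
      finally show ?thesis .
    qed
    have "\<forall>n\<in>hyp_nodes N. cmp L (leg n) \<sigma> = c n"
    proof
      fix n assume n: "n \<in> hyp_nodes N"
      have vn: "c' (VN v) = c (VN v)" if v: "v \<in> Vs N" for v
        using y v yxs by (simp add: c_def)
      have hd: "c' (HD v) = c (HD v)" if v: "v \<in> Vs N" for v
        using vn[OF v] r1[OF v] by (simp add: c_def)
      have en: "c' (EN e) = c (EN e)" if e: "e \<in> Es N" for e
        using r2[OF e] hd[OF src_V[OF e]] by (simp add: c_def a_def)
      have ha: "c' (HA v) = c (HA v)" if v: "v \<in> Vs N" for v
      proof (rule prod_ext[OF cat prodIn[OF v]])
        show "c' (HA v) \<in> hom L (trm L) (Inobj K v)" using c'h[OF HA_in[OF v]] by (simp add: sheaf_stalk_def)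
        show "c (HA v) \<in> hom L (trm L) (Inobj K v)" using w[OF v] by (simp add: c_def)
        fix e assume e: "e \<in> in_edges N v"
        then have eE: "e \<in> Es N" and te: "tgt N e = v" using inE by auto
        have "cmp L (piIn K v e) (c' (HA v)) = c' (EN e)" using r3[OF eE] te by simp
        also have "\<dots> = a e" using en[OF eE] by (simp add: c_def)
        also have "\<dots> = cmp L (piIn K v e) (c (HA v))" using w[OF v] e by (simp add: c_def)
        finally show "cmp L (piIn K v e) (c' (HA v)) = cmp L (piIn K v e) (c (HA v))" .
      qed
      from n show "cmp L (leg n) \<sigma> = c n"
        unfolding hyp_nodes_def c'_def[symmetric] using vn hd en ha by auto
    qed
    then show "\<sigma> = u" using uniq[OF \<sigma>] by blast
  qed
qed

end

theorem mainTheorem8: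
  fixes L :: "('o,'m) lcat"
    and N :: "('v,'e,'o,'m) lnet"
    and K :: "('v,'e,'o,'m) pchoice"
  assumes "liability_category L"
    and "liability_network L N K"
    and "acyclic (edge_rel N)"
  shows "(\<exists>xs. xs \<in> hom L (trm L) (Pobj K) \<and> clearing_push L N K xs = xs \<and>
            (\<forall>x\<in>hom L (trm L) (Pobj K).
               (clearing_push L N K ^^ Suc (max_path_len N)) x = xs))
         \<and> (\<forall>Lim leg. is_limit L (hyp_nodes N) (sheaf_stalk L N K) (sheaf_res L N K) Lim leg
              \<longrightarrow> (\<exists>!\<sigma>. \<sigma> \<in> hom L (trm L) Lim))"
proof -
  interpret LN L N K by (rule LN.intro[OF assms(1,2)])
  show ?thesis using part1[OF assms(3)] sheaf_unique[OF assms(3)] by blast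
qed

end
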